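(* Fix an integer $m\ge1$. Then as $n\to\infty$: (a) $P\big(W_{n-m}=W_{(n)}\big)=P(X_m=M)+O(1/n)$; (b) $P\big(D_{n-m}=D_{(n)}\big)=P(X_m=M)+o(1)$.
   Context: For each $n\ge1$, let $W_0,\dots,W_{n-1}$ be independent with $W_j\sim\mathrm{Exp}\big(\frac{n-j}{n}\big)$ (exponential with rate $\frac{n-j}{n}$), and $W_{(n)}=\max_{0\le j\le n-1}W_j$. Let $D_0,\dots,D_{n-1}$ be independent geometric random variables with $P(D_j=r)=\big(\frac{j}{n}\big)^{r-1}\frac{n-j}{n}$ for $r=1,2,\dots$, and $D_{(n)}=\max_{0\le j\le n-1}D_j$. Let $(X_i)_{i\ge1}$ be independent with $X_i\sim\mathrm{Exp}(i)$ (rate $i$) and $M=\sup_{i\ge1}X_i$. *)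

theory Defs
  imports "HOL-Probability.Probability" "HOL-Library.Landau_Symbols"
begin

definition W_space :: "nat \<Rightarrow> (nat \<Rightarrow> real) measure" where
  "W_space n = (\<Pi>\<^sub>M j\<in>{..<n}. density lborel (exponential_density (real (n - j) / real n)))"

definition pW :: "nat \<Rightarrow> nat \<Rightarrow> real" where
  "pW n m = measure (W_space n)
     {\<omega> \<in> space (W_space n). \<omega> (n - m) = Max (\<omega> ` {..<n})}"

text \<open>Joint law of (D_0,...,D_{n-1}): independent, P(D_j = r) = (j/n)^(r-1) (n-j)/n, r \<ge> 1.
  D_j - 1 is geometric (number of failures) with success probability (n-j)/n.\<close>
definition D_space :: "nat \<Rightarrow> (nat \<Rightarrow> nat) measure" where
  "D_space n = (\<Pi>\<^sub>M j\<in>{..<n}. measure_pmf (map_pmf Suc (geometric_pmf (real (n - j) / real n))))"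

definition pD :: "nat \<Rightarrow> nat \<Rightarrow> real" where
  "pD n m = measure (D_space n)
     {\<omega> \<in> space (D_space n). \<omega> (n - m) = Max (\<omega> ` {..<n})}"

definition X_space :: "(nat \<Rightarrow> real) measure" where
  "X_space = (\<Pi>\<^sub>M i\<in>{1..}. density lborel (exponential_density (real i)))"

definition pX :: "nat \<Rightarrow> real" where
  "pX m = measure X_space {\<omega> \<in> space X_space. \<omega> m = (SUP i\<in>{1..}. \<omega> i)}"

end

theory Submission
  imports Defs
begin


lemma maxprob:
  fixes M :: "'i \<Rightarrow> ('a::linorder) measure"
  assumes fin: "finite J" and k: "k \<in> J"
    and prob: "\<And>j. j \<in> J \<Longrightarrow> prob_space (M j)"
    and le_sets: "\<And>j y. j \<in> J \<Longrightarrow> {x\<in>space (M j). x \<le> y} \<in> sets (M j)"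
    and S_sets: "{\<omega>\<in>space (PiM J M). \<forall>j\<in>J. \<omega> j \<le> \<omega> k} \<in> sets (PiM J M)"
  shows "emeasure (PiM J M) {\<omega>\<in>space (PiM J M). \<forall>j\<in>J. \<omega> j \<le> \<omega> k}
       = (\<integral>\<^sup>+y. (\<Prod>j\<in>J-{k}. emeasure (M j) {x\<in>space (M j). x \<le> y}) \<partial>M k)"
proof -
  define M' where "M' i = (if i \<in> J then M i else count_space {undefined})" for i
  interpret M': prob_space "M' i" for i
    using prob by (cases "i \<in> J") (auto intro!: prob_spaceI simp: M'_def)
  interpret P: product_prob_space M' J
    by unfold_locales
  have PiMeq: "PiM J M = PiM J M'"
    by (intro PiM_cong) (auto simp: M'_def)
  define I where "I = J - {k}"
  have JI: "J = insert k I" and kI: "k \<notin> I" and finI: "finite I"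
    using k fin by (auto simp: I_def)
  define S where "S = {\<omega>\<in>space (PiM J M'). \<forall>j\<in>J. \<omega> j \<le> \<omega> k}"
  have Ssets: "S \<in> sets (PiM (insert k I) M')"
    using S_sets unfolding S_def PiMeq JI[symmetric] .
  have "emeasure (PiM J M') S = (\<integral>\<^sup>+\<omega>. indicator S \<omega> \<partial>PiM (insert k I) M')"
    using Ssets JI by simp
  also have "\<dots> = (\<integral>\<^sup>+ y. (\<integral>\<^sup>+ x. indicator S (x(k := y)) \<partial>(Pi\<^sub>M I M')) \<partial>(M' k))"
    by (rule P.product_nn_integral_insert_rev[OF finI kI]) (use Ssets in simp)
  also have "\<dots> = (\<integral>\<^sup>+ y. emeasure (PiM I M') (Pi\<^sub>E I (\<lambda>j. {x\<in>space (M' j). x \<le> y})) \<partial>(M' k))"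
  proof (rule nn_integral_cong)
    fix y assume y: "y \<in> space (M' k)"
    have "(\<integral>\<^sup>+ x. indicator S (x(k := y)) \<partial>(Pi\<^sub>M I M')) =
          (\<integral>\<^sup>+ x. indicator (Pi\<^sub>E I (\<lambda>j. {x\<in>space (M' j). x \<le> y})) x \<partial>(Pi\<^sub>M I M'))"
    proof (rule nn_integral_cong)
      fix x assume x: "x \<in> space (Pi\<^sub>M I M')"
      have "x(k := y) \<in> space (PiM J M')"
        using x y kI unfolding JI by (auto simp: space_PiM PiE_iff extensional_def)
      then show "indicator S (x(k := y)) = (indicator (Pi\<^sub>E I (\<lambda>j. {x\<in>space (M' j). x \<le> y})) x :: ennreal)"
        using x kI unfolding S_def JI
        by (auto simp: indicator_def space_PiM PiE_iff split: if_splits)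
    qed
    also have "\<dots> = emeasure (PiM I M') (Pi\<^sub>E I (\<lambda>j. {x\<in>space (M' j). x \<le> y}))"
    proof (rule nn_integral_indicator)
      show "Pi\<^sub>E I (\<lambda>j. {x\<in>space (M' j). x \<le> y}) \<in> sets (PiM I M')"
        using le_sets JI by (intro sets_PiM_I_finite finI) (auto simp: M'_def)
    qed
    finally show "(\<integral>\<^sup>+ x. indicator S (x(k := y)) \<partial>(Pi\<^sub>M I M')) = emeasure (PiM I M') (Pi\<^sub>E I (\<lambda>j. {x\<in>space (M' j). x \<le> y}))" .
  qed
  also have "\<dots> = (\<integral>\<^sup>+ y. (\<Prod>j\<in>I. emeasure (M' j) {x\<in>space (M' j). x \<le> y}) \<partial>(M' k))"
    using le_sets JI by (intro nn_integral_cong P.emeasure_PiM finI) (auto simp: M'_def)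
  also have "\<dots> = (\<integral>\<^sup>+y. (\<Prod>j\<in>J-{k}. emeasure (M j) {x\<in>space (M j). x \<le> y}) \<partial>M k)"
  proof -
    have "M' k = M k" using k by (simp add: M'_def)
    moreover have "\<And>y. (\<Prod>j\<in>J-{k}. emeasure (M' j) {x\<in>space (M' j). x \<le> y}) = (\<Prod>j\<in>J-{k}. emeasure (M j) {x\<in>space (M j). x \<le> y})"
      by (intro prod.cong) (auto simp: M'_def)
    ultimately show ?thesis unfolding I_def by simp
  qed
  finally show ?thesis unfolding S_def PiMeq .
qed



definition ecdf :: "real \<Rightarrow> real \<Rightarrow> real" where
  "ecdf r y = 1 - exp (- r * max 0 y)"

lemma ecdf_measurable[measurable]: "ecdf r \<in> borel_measurable borel"
  unfolding ecdf_def by measurable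

lemma ecdf_nonneg: "0 \<le> r \<Longrightarrow> 0 \<le> ecdf r y"
  unfolding ecdf_def by (auto simp: mult_nonneg_nonneg)

lemma ecdf_le1: "ecdf r y \<le> 1"
  unfolding ecdf_def by simp

lemma ecdf_mono: "0 \<le> r \<Longrightarrow> y \<le> z \<Longrightarrow> ecdf r y \<le> ecdf r z"
  unfolding ecdf_def by (auto intro!: mult_left_mono simp: max_def)

lemma ecdf_scale: "0 < a \<Longrightarrow> ecdf (a * r) y = ecdf r (a * y)"
  unfolding ecdf_def by (auto simp: max_def mult_le_0_iff zero_le_mult_iff mult_ac)

lemma emeasure_exp_le:
  assumes "0 < r"
  shows "emeasure (density lborel (exponential_density r)) {x\<in>space (density lborel (exponential_density r)). x \<le> y}
         = ennreal (ecdf r y)"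
proof -
  have "{x\<in>space (density lborel (exponential_density r)). x \<le> y} = {..y}" by auto
  then show ?thesis
    using emeasure_erlang_density[OF assms, of 0 y]
    by (simp add: erlang_CDF_0 ecdf_def max_def)
qed

definition bnd :: "(real \<Rightarrow> real) \<Rightarrow> bool" where
  "bnd h \<longleftrightarrow> h \<in> borel_measurable borel \<and> (\<forall>x. 0 \<le> h x \<and> h x \<le> 1)"

definition Eexp :: "real \<Rightarrow> (real \<Rightarrow> real) \<Rightarrow> real" where
  "Eexp c h = integral\<^sup>L (density lborel (exponential_density c)) h"

lemma Eexp_integrable:
  assumes c: "0 < c" and h: "bnd h"
  shows "integrable (density lborel (exponential_density c)) h"
proof -
  interpret prob_space "density lborel (exponential_density c)"
    using prob_space_exponential_density[OF c] .
  show ?thesis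
    using h unfolding bnd_def
    by (intro integrable_const_bound[where B=1]) auto
qed

lemma Eexp_lborel:
  assumes c: "0 < c" and h: "bnd h"
  shows "Eexp c h = (\<integral>x. exponential_density c x * h x \<partial>lborel)"
  unfolding Eexp_def using h c
  by (subst integral_density) (auto simp: bnd_def exponential_density_nonneg)

lemma Eexp_nn:
  assumes c: "0 < c" and h: "bnd h"
  shows "ennreal (Eexp c h) = (\<integral>\<^sup>+x. ennreal (exponential_density c x * h x) \<partial>lborel)"
proof -
  have "ennreal (Eexp c h) = (\<integral>\<^sup>+x. ennreal (h x) \<partial>density lborel (exponential_density c))"
    unfolding Eexp_def
    by (rule nn_integral_eq_integral[symmetric]) (use Eexp_integrable[OF c h] h in \<open>auto simp: bnd_def\<close>)
  also have "\<dots> = (\<integral>\<^sup>+x. ennreal (exponential_density c x * h x) \<partial>lborel)"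
    using h by (subst nn_integral_density) (auto simp: bnd_def ennreal_mult exponential_density_nonneg[OF c])
  finally show ?thesis .
qed

lemma Eexp_const: "0 < c \<Longrightarrow> Eexp c (\<lambda>_. a) = a"
proof -
  assume c: "0 < c"
  interpret prob_space "density lborel (exponential_density c)"
    using prob_space_exponential_density[OF c] .
  have "prob UNIV = 1" using prob_space by simp
  then show ?thesis unfolding Eexp_def by simp
qed

lemma bnd_compl: "bnd h \<Longrightarrow> bnd (\<lambda>x. 1 - h x)"
  unfolding bnd_def by auto

lemma Eexp_compl:
  assumes c: "0 < c" and h: "bnd h"
  shows "Eexp c (\<lambda>x. 1 - h x) = 1 - Eexp c h"
proof -
  interpret prob_space "density lborel (exponential_density c)"
    using prob_space_exponential_density[OF c] .
  have "prob UNIV = 1" using prob_space by simp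
  then show ?thesis unfolding Eexp_def
    using Eexp_integrable[OF c h] by (subst Bochner_Integration.integral_diff) auto
qed

lemma Eexp_nonneg: "0 < c \<Longrightarrow> bnd h \<Longrightarrow> 0 \<le> Eexp c h"
  unfolding Eexp_def bnd_def by (auto intro!: integral_nonneg_AE)

lemma Eexp_le1:
  assumes c: "0 < c" and h: "bnd h" shows "Eexp c h \<le> 1"
  using Eexp_nonneg[OF c bnd_compl[OF h]] Eexp_compl[OF c h] by simp

lemma Eexp_mono:
  assumes c: "0 < c" and h: "bnd h" and g: "bnd g" and le: "\<And>x. 0 \<le> x \<Longrightarrow> h x \<le> g x"
  shows "Eexp c h \<le> Eexp c g"
proof -
  have "(\<integral>x. exponential_density c x * h x \<partial>lborel) \<le> (\<integral>x. exponential_density c x * g x \<partial>lborel)"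
  proof (rule integral_mono)
    show "integrable lborel (\<lambda>x. exponential_density c x * h x)"
      using Eexp_integrable[OF c h] h c
      by (subst (asm) integrable_density) (auto simp: bnd_def exponential_density_nonneg)
    show "integrable lborel (\<lambda>x. exponential_density c x * g x)"
      using Eexp_integrable[OF c g] g c
      by (subst (asm) integrable_density) (auto simp: bnd_def exponential_density_nonneg)
    fix x show "exponential_density c x * h x \<le> exponential_density c x * g x"
      using le[of x] by (cases "x < 0") (auto simp: exponential_density_def c less_imp_le intro!: mult_left_mono)
  qed
  then show ?thesis using Eexp_lborel[OF c h] Eexp_lborel[OF c g] by simp
qed



lemma Eexp_int_lborel:
  assumes c: "0 < c" and h: "bnd h"
  shows "integrable lborel (\<lambda>x. exponential_density c x * h x)"
  using Eexp_integrable[OF c h] h c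
  by (subst (asm) integrable_density) (auto simp: bnd_def exponential_density_nonneg)

lemma bnd_one: "bnd (\<lambda>_. 1)" unfolding bnd_def by auto

lemma Eexp_dom:
  assumes m: "0 < m" and cm: "m \<le> c" and h: "bnd h"
  shows "Eexp c h \<le> (c / m) * Eexp m h"
proof -
  have c: "0 < c" using m cm by simp
  have "(\<integral>x. exponential_density c x * h x \<partial>lborel) \<le> (\<integral>x. (c/m) * (exponential_density m x * h x) \<partial>lborel)"
  proof (rule integral_mono)
    show "integrable lborel (\<lambda>x. exponential_density c x * h x)" by (rule Eexp_int_lborel[OF c h])
    show "integrable lborel (\<lambda>x. (c/m) * (exponential_density m x * h x))"
      using Eexp_int_lborel[OF m h] by simp
    fix x
    show "exponential_density c x * h x \<le> (c/m) * (exponential_density m x * h x)"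
    proof (cases "x < 0")
      case False
      have "exp (- x * c) \<le> exp (- x * m)" using False cm by (auto intro!: mult_left_mono)
      then have *: "c * exp (- x * c) \<le> (c / m) * (m * exp (- x * m))"
        using m c by (simp add: field_simps)
      have hx: "0 \<le> h x" using h by (simp add: bnd_def)
      have "c * exp (- x * c) * h x \<le> ((c / m) * (m * exp (- x * m))) * h x" using * hx by (rule mult_right_mono)
      then show ?thesis using False m by (simp add: exponential_density_def mult_ac)
    qed (simp add: exponential_density_def)
  qed
  then show ?thesis using Eexp_lborel[OF c h] Eexp_lborel[OF m h] by simp
qed

lemma Eexp_close:
  assumes m: "0 < m" and c: "0 < c" and h: "bnd h"
  shows "\<bar>Eexp c h - Eexp m h\<bar> \<le> \<bar>c - m\<bar> / m"
proof (cases "m \<le> c")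
  case True
  have 1: "Eexp c h \<le> (c / m) * Eexp m h" by (rule Eexp_dom[OF m True h])
  have 2: "Eexp c (\<lambda>x. 1 - h x) \<le> (c / m) * Eexp m (\<lambda>x. 1 - h x)" by (rule Eexp_dom[OF m True bnd_compl[OF h]])
  have e0: "0 \<le> Eexp m h" "Eexp m h \<le> 1" using Eexp_nonneg[OF m h] Eexp_le1[OF m h] by auto
  have "Eexp c h \<le> Eexp m h + (c - m) / m"
  proof -
    have "(c / m) * Eexp m h = Eexp m h + (c/m - 1) * Eexp m h" by (simp add: algebra_simps)
    also have "\<dots> \<le> Eexp m h + (c/m - 1) * 1"
      using e0 True m by (intro add_left_mono mult_left_mono) (auto simp: field_simps)
    finally show ?thesis using 1 m by (simp add: field_simps)
  qed
  moreover have "Eexp m h - (c - m) / m \<le> Eexp c h"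
  proof -
    have "1 - Eexp c h \<le> (c/m) * (1 - Eexp m h)"
      using 2 Eexp_compl[OF c h] Eexp_compl[OF m h] by simp
    also have "(c/m) * (1 - Eexp m h) = (1 - Eexp m h) + (c/m - 1) * (1 - Eexp m h)" by (simp add: algebra_simps)
    also have "\<dots> \<le> (1 - Eexp m h) + (c/m - 1) * 1"
      using e0 True m by (intro add_left_mono mult_left_mono) (auto simp: field_simps)
    finally show ?thesis using m by (simp add: field_simps)
  qed
  ultimately show ?thesis using True by (simp add: abs_le_iff)
next
  case False
  then have cm: "c \<le> m" by simp
  have 1: "Eexp m h \<le> (m / c) * Eexp c h" by (rule Eexp_dom[OF c cm h])
  have 2: "Eexp m (\<lambda>x. 1 - h x) \<le> (m / c) * Eexp c (\<lambda>x. 1 - h x)" by (rule Eexp_dom[OF c cm bnd_compl[OF h]])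
  have e0: "0 \<le> Eexp m h" "Eexp m h \<le> 1" using Eexp_nonneg[OF m h] Eexp_le1[OF m h] by auto
  have "c * Eexp m h \<le> m * Eexp c h"
    using 1 c m by (simp add: field_simps)
  moreover have "(m - c) * Eexp m h \<le> (m - c) * 1"
    using e0 cm by (intro mult_left_mono) auto
  ultimately have l1: "m * Eexp m h - (m - c) \<le> m * Eexp c h" by (simp add: algebra_simps)
  have "Eexp m h - (m - c)/m = (m * Eexp m h - (m - c))/m" using m by (simp add: field_simps)
  also have "\<dots> \<le> (m * Eexp c h)/m" using l1 m by (intro divide_right_mono) auto
  also have "\<dots> = Eexp c h" using m by simp
  finally have lo: "Eexp m h - (m - c)/m \<le> Eexp c h" .
  have "1 - Eexp m h \<le> (m / c) * (1 - Eexp c h)"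
    using 2 Eexp_compl[OF c h] Eexp_compl[OF m h] by simp
  then have "(c/m) * (1 - Eexp m h) \<le> 1 - Eexp c h"
    using c m by (simp add: field_simps)
  moreover have "(c/m) * (1 - Eexp m h) = (1 - Eexp m h) - (1 - c/m) * (1 - Eexp m h)" by (simp add: algebra_simps)
  moreover have "(1 - c/m) * (1 - Eexp m h) \<le> (1 - c/m) * 1"
    using e0 cm m by (intro mult_left_mono) (auto simp: field_simps)
  ultimately have up: "Eexp c h \<le> Eexp m h + (m - c)/m" using m by (simp add: field_simps)
  show ?thesis using lo up cm by (simp add: abs_le_iff)
qed

lemma bnd_scale: "bnd h \<Longrightarrow> bnd (\<lambda>x. h (a * x))"
  unfolding bnd_def by auto

lemma Eexp_scale:
  assumes a: "0 < a" and c: "0 < c" and h: "bnd h"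
  shows "Eexp (a * c) (\<lambda>x. h (a * x)) = Eexp c h"
proof -
  have ac: "0 < a * c" using a c by simp
  have hm[measurable]: "h \<in> borel_measurable borel" using h by (simp add: bnd_def)
  have "ennreal (Eexp c h) = (\<integral>\<^sup>+x. ennreal (exponential_density c x * h x) \<partial>lborel)"
    by (rule Eexp_nn[OF c h])
  also have "\<dots> = ennreal \<bar>a\<bar> * (\<integral>\<^sup>+x. ennreal (exponential_density c (0 + a * x) * h (0 + a * x)) \<partial>lborel)"
    by (rule nn_integral_real_affine) (use a in auto)
  also have "\<dots> = (\<integral>\<^sup>+x. ennreal a * ennreal (exponential_density c (a * x) * h (a * x)) \<partial>lborel)"
    using a by (subst nn_integral_cmult) auto
  also have "\<dots> = (\<integral>\<^sup>+x. ennreal (exponential_density (a * c) x * h (a * x)) \<partial>lborel)"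
  proof (rule nn_integral_cong)
    fix x
    have "a * exponential_density c (a * x) = exponential_density (a * c) x"
      using a by (auto simp: exponential_density_def mult_less_0_iff mult_ac)
    then show "ennreal a * ennreal (exponential_density c (a * x) * h (a * x)) = ennreal (exponential_density (a * c) x * h (a * x))"
      using a c h by (subst ennreal_mult[symmetric]) (auto simp: bnd_def exponential_density_nonneg mult.assoc[symmetric])
  qed
  also have "\<dots> = ennreal (Eexp (a * c) (\<lambda>x. h (a * x)))"
    by (rule Eexp_nn[OF ac bnd_scale[OF h], symmetric])
  finally show ?thesis
    using Eexp_nonneg[OF c h] Eexp_nonneg[OF ac bnd_scale[OF h]] by simp
qed

lemma Eexp_tail:
  assumes m: "0 < m" and a: "0 \<le> a" and K: "0 \<le> K" and h: "bnd h"
    and le: "\<And>x. 0 \<le> x \<Longrightarrow> h x \<le> K * exp (- a * x)"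
  shows "Eexp m h \<le> K * m / (m + a)"
proof -
  have ma: "0 < m + a" using m a by simp
  have "(\<integral>x. exponential_density m x * h x \<partial>lborel) \<le> (\<integral>x. (K * m / (m + a)) * (exponential_density (m + a) x * 1) \<partial>lborel)"
  proof (rule integral_mono)
    show "integrable lborel (\<lambda>x. exponential_density m x * h x)" by (rule Eexp_int_lborel[OF m h])
    show "integrable lborel (\<lambda>x. (K * m / (m + a)) * (exponential_density (m + a) x * 1))"
      using Eexp_int_lborel[OF ma bnd_one] by simp
    fix x
    show "exponential_density m x * h x \<le> (K * m / (m + a)) * (exponential_density (m + a) x * 1)"
    proof (cases "x < 0")
      case False
      have "m * exp (- x * m) * h x \<le> m * exp (- x * m) * (K * exp (- a * x))"
        using le[of x] False m by (intro mult_left_mono) auto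
      also have "\<dots> = K * m * (exp (- x * m) * exp (- a * x))" by (simp add: mult_ac)
      also have "exp (- x * m) * exp (- a * x) = exp (- x * (m + a))"
        by (simp add: exp_add[symmetric] algebra_simps)
      also have "K * m * exp (- x * (m + a)) = (K * m / (m + a)) * ((m + a) * exp (- x * (m + a)))"
        using ma by simp
      finally show ?thesis using False by (simp add: exponential_density_def)
    qed (simp add: exponential_density_def)
  qed
  also have "\<dots> = (K * m / (m + a)) * Eexp (m + a) (\<lambda>_. 1)"
    using Eexp_lborel[OF ma bnd_one] by simp
  finally show ?thesis using Eexp_lborel[OF m h] Eexp_const[OF ma] by simp
qed



lemma Eexp_nn_density:
  assumes c: "0 < c" and h: "bnd h"
  shows "ennreal (Eexp c h) = (\<integral>\<^sup>+x. ennreal (h x) \<partial>density lborel (exponential_density c))"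
  unfolding Eexp_def
  by (rule nn_integral_eq_integral[symmetric]) (use Eexp_integrable[OF c h] h in \<open>auto simp: bnd_def\<close>)

lemma Eexp_diff:
  assumes c: "0 < c" and h: "bnd h" and g: "bnd g"
  shows "Eexp c (\<lambda>x. h x - g x) = Eexp c h - Eexp c g"
  unfolding Eexp_def using Eexp_integrable[OF c h] Eexp_integrable[OF c g]
  by (rule Bochner_Integration.integral_diff)

definition gp :: "nat \<Rightarrow> nat \<Rightarrow> real \<Rightarrow> real" where
  "gp m N x = (\<Prod>i\<in>{1..N}-{m}. ecdf (real i) x)"

definition Ip :: "nat \<Rightarrow> nat \<Rightarrow> real" where
  "Ip m N = Eexp (real m) (gp m N)"

lemma prod_01:
  fixes f :: "'a \<Rightarrow> real"
  assumes "\<And>i. i \<in> A \<Longrightarrow> 0 \<le> f i \<and> f i \<le> 1"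
  shows "0 \<le> prod f A \<and> prod f A \<le> 1"
  using assms by (auto intro!: prod_nonneg prod_le_1)

lemma bnd_gp: "bnd (gp m N)"
  unfolding bnd_def gp_def
  by (auto intro!: prod_nonneg prod_le_1 ecdf_nonneg ecdf_le1)

lemma gp_mono: "x \<le> y \<Longrightarrow> gp m N x \<le> gp m N y"
  unfolding gp_def by (intro prod_mono) (auto intro!: ecdf_nonneg ecdf_mono)

lemma prod_subset_le:
  fixes f :: "'a \<Rightarrow> real"
  assumes "finite B" "A \<subseteq> B" "\<And>i. i \<in> B \<Longrightarrow> 0 \<le> f i \<and> f i \<le> 1"
  shows "prod f B \<le> prod f A"
proof -
  have "prod f B = prod f A * prod f (B - A)"
    using assms by (metis prod.subset_diff mult.commute)
  also have "\<dots> \<le> prod f A * 1"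
  proof (rule mult_left_mono)
    show "prod f (B - A) \<le> 1" by (rule prod_le_1) (use assms in auto)
    show "0 \<le> prod f A" by (rule prod_nonneg) (use assms in blast)
  qed
  finally show ?thesis by simp
qed

lemma gp_anti: "N \<le> N' \<Longrightarrow> gp m N' x \<le> gp m N x"
  unfolding gp_def by (rule prod_subset_le) (auto intro!: ecdf_nonneg ecdf_le1)

lemma Ip_anti: "0 < m \<Longrightarrow> N \<le> N' \<Longrightarrow> Ip m N' \<le> Ip m N"
  unfolding Ip_def by (intro Eexp_mono bnd_gp gp_anti) auto

lemma Ip_nonneg: "0 < m \<Longrightarrow> 0 \<le> Ip m N"
  unfolding Ip_def by (intro Eexp_nonneg bnd_gp) auto

lemma one_minus_prod_le:
  fixes a :: "'a \<Rightarrow> real"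
  assumes "finite B" "\<And>i. i \<in> B \<Longrightarrow> 0 \<le> a i \<and> a i \<le> 1"
  shows "1 - (\<Prod>i\<in>B. 1 - a i) \<le> (\<Sum>i\<in>B. a i)"
  using assms
proof (induction B rule: finite_induct)
  case (insert j B)
  have P: "0 \<le> (\<Prod>i\<in>B. 1 - a i) \<and> (\<Prod>i\<in>B. 1 - a i) \<le> 1"
    using insert.prems by (intro prod_01) auto
  have aj: "0 \<le> a j" "a j \<le> 1" using insert.prems by auto
  have IH: "1 - (\<Prod>i\<in>B. 1 - a i) \<le> (\<Sum>i\<in>B. a i)" using insert by auto
  have "a j * (\<Prod>i\<in>B. 1 - a i) \<le> a j * 1" using P aj by (intro mult_left_mono) auto
  then show ?case using insert.hyps IH by (simp add: algebra_simps)
qed simp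

lemma geom_tele:
  fixes q :: real
  assumes "n \<le> N"
  shows "(\<Sum>i\<in>{n+1..N}. q ^ i) * (1 - q) = q ^ (n+1) - q ^ (N+1)"
  using assms
proof (induction N rule: dec_induct)
  case base then show ?case by simp
next
  case (step N)
  have eq: "{n+1..Suc N} = insert (Suc N) {n+1..N}" using step by auto
  have "(\<Sum>i\<in>{n+1..Suc N}. q^i) * (1-q) = q^(Suc N) * (1-q) + (\<Sum>i\<in>{n+1..N}. q^i) * (1-q)"
    unfolding eq by (simp add: distrib_right)
  also have "\<dots> = q^(Suc N)*(1-q) + (q^(n+1) - q^(N+1))" using step.IH by simp
  also have "\<dots> = q^(n+1) - q^(Suc N + 1)" by (simp add: algebra_simps)
  finally show ?case .
qed

lemma q_bound:
  fixes q :: real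
  assumes q: "0 \<le> q" "q \<le> 1" and m: "1 \<le> m" "m \<le> n" and n: "2 \<le> n" "n \<le> N"
  shows "(\<Prod>i\<in>{1..n}-{m}. 1 - q^i) - (\<Prod>i\<in>{1..N}-{m}. 1 - q^i) \<le> 2 * q^(n+1)"
proof -
  define A where "A = {1..n}-{m}"
  define B where "B = {n+1..N}"
  have AB: "{1..N}-{m} = A \<union> B" "A \<inter> B = {}" using m n by (auto simp: A_def B_def)
  have f01: "\<And>i. 0 \<le> 1 - q^i \<and> 1 - q^i \<le> 1" using q by (auto simp: power_le_one)
  define PA where "PA = (\<Prod>i\<in>A. 1 - q^i)"
  define PB where "PB = (\<Prod>i\<in>B. 1 - q^i)"
  have PA01: "0 \<le> PA" "PA \<le> 1" using prod_01[of A "\<lambda>i. 1 - q^i"] f01 unfolding PA_def by auto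
  have split: "(\<Prod>i\<in>{1..N}-{m}. 1 - q^i) = PA * PB"
    unfolding AB PA_def PB_def by (rule prod.union_disjoint) (auto simp: A_def B_def AB)
  have PAle: "PA \<le> 2 * (1 - q)"
  proof (cases "m = 1")
    case True
    have "2 \<in> A" using True n by (auto simp: A_def)
    then have "PA \<le> (\<Prod>i\<in>{2}. 1 - q^i)" unfolding PA_def
      by (intro prod_subset_le) (auto simp: A_def q power_le_one)
    also have "\<dots> = (1 - q) * (1 + q)" by (simp add: power2_eq_square algebra_simps)
    also have "\<dots> \<le> (1 - q) * 2" using q by (intro mult_left_mono) auto
    finally show ?thesis by simp
  next
    case False
    have "1 \<in> A" using False n by (auto simp: A_def)
    then have "PA \<le> (\<Prod>i\<in>{1}. 1 - q^i)" unfolding PA_def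
      by (intro prod_subset_le) (auto simp: A_def q power_le_one)
    also have "\<dots> \<le> 2 * (1 - q)" using q by simp
    finally show ?thesis .
  qed
  have "1 - PB \<le> (\<Sum>i\<in>B. q^i)" unfolding PB_def
    by (rule one_minus_prod_le) (auto simp: B_def q power_le_one)
  then have "PA - PA * PB \<le> PA * (\<Sum>i\<in>B. q^i)"
    using PA01 by (metis mult_left_mono right_diff_distrib' mult.right_neutral)
  also have "\<dots> \<le> 2 * (1 - q) * (\<Sum>i\<in>B. q^i)"
    using PAle by (intro mult_right_mono) (auto intro!: sum_nonneg simp: q)
  also have "\<dots> = 2 * ((\<Sum>i\<in>{n+1..N}. q^i) * (1 - q))"
    by (simp add: B_def mult_ac)
  also have "\<dots> = 2 * (q^(n+1) - q^(N+1))"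
    using geom_tele[OF n(2), of q] by simp
  also have "\<dots> \<le> 2 * q^(n+1)" using q by simp
  finally show ?thesis using split by (simp add: PA_def A_def)
qed

lemma ecdf_nat_pow: "0 \<le> x \<Longrightarrow> ecdf (real i) x = 1 - exp (- x) ^ i"
  unfolding ecdf_def by (simp add: exp_of_nat_mult[symmetric] mult_ac)

lemma gp_diff:
  assumes m: "1 \<le> m" "m \<le> n" and n: "2 \<le> n" "n \<le> N" and x: "0 \<le> x"
  shows "gp m n x - gp m N x \<le> 2 * exp (- (real n + 1) * x)"
proof -
  have "gp m n x - gp m N x = (\<Prod>i\<in>{1..n}-{m}. 1 - exp (- x)^i) - (\<Prod>i\<in>{1..N}-{m}. 1 - exp (- x)^i)"
    unfolding gp_def using x by (simp add: ecdf_nat_pow)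
  also have "\<dots> \<le> 2 * exp (- x) ^ (n+1)"
    by (rule q_bound) (use m n x in auto)
  also have "exp (- x) ^ (n+1) = exp (real (n+1) * (- x))"
    by (simp only: exp_of_nat_mult)
  also have "\<dots> = exp (- (real n + 1) * x)" by (simp add: algebra_simps)
  finally show ?thesis .
qed

lemma Ip_diff:
  assumes m: "1 \<le> m" "m \<le> n" and n: "2 \<le> n" "n \<le> N"
  shows "Ip m n - Ip m N \<le> 2 * real m / (real m + (real n + 1))"
proof -
  have mp: "0 < real m" using m by simp
  have b: "bnd (\<lambda>x. gp m n x - gp m N x)"
    using bnd_gp[of m n] bnd_gp[of m N] gp_anti[OF n(2), of m] unfolding bnd_def
    by (auto simp: algebra_simps) (smt (verit))
  have "Ip m n - Ip m N = Eexp m (\<lambda>x. gp m n x - gp m N x)"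
    unfolding Ip_def by (rule Eexp_diff[symmetric]) (use mp bnd_gp in auto)
  also have "\<dots> \<le> 2 * real m / (real m + (real n + 1))"
    by (rule Eexp_tail[OF mp _ _ b]) (use gp_diff[OF m n] in auto)
  finally show ?thesis .
qed



lemma Wset_eq:
  fixes \<omega> :: "nat \<Rightarrow> 'a::linorder"
  assumes "k < n"
  shows "(\<omega> k = Max (\<omega> ` {..<n})) \<longleftrightarrow> (\<forall>j\<in>{..<n}. \<omega> j \<le> \<omega> k)"
proof -
  have "{..<n} \<noteq> {}" using assms by auto
  then show ?thesis using assms
    by (subst eq_commute) (auto simp: Max_eq_iff)
qed

lemma pW_eq:
  assumes m: "1 \<le> m" "m \<le> n"
  shows "pW n m = Ip m n"
proof -
  define k where "k = n - m"
  have kn: "k < n" using m by (simp add: k_def)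
  have np: "0 < real n" using m by simp
  define M where "M j = density lborel (exponential_density (real (n - j) / real n))" for j
  have Wdef: "W_space n = PiM {..<n} M" unfolding W_space_def M_def ..
  have prob: "prob_space (M j)" if "j \<in> {..<n}" for j
    using that unfolding M_def by (intro prob_space_exponential_density) auto
  have S_sets: "{\<omega>\<in>space (PiM {..<n} M). \<forall>j\<in>{..<n}. \<omega> j \<le> \<omega> k} \<in> sets (PiM {..<n} M)"
  proof -
    have comp: "(\<lambda>\<omega>. \<omega> j) \<in> borel_measurable (PiM {..<n} M)" if "j < n" for j
      using measurable_component_singleton[of j "{..<n}" M] that by (simp add: M_def)
    have "{\<omega>\<in>space (PiM {..<n} M). \<omega> j \<le> \<omega> k} \<in> sets (PiM {..<n} M)" if "j \<in> {..<n}" for j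
      using comp[of j] comp[OF kn] that by (intro borel_measurable_le) auto
    then show ?thesis by (intro sets.sets_Collect_finite_All) auto
  qed
  have P1: "pW n m = measure (PiM {..<n} M) {\<omega>\<in>space (PiM {..<n} M). \<forall>j\<in>{..<n}. \<omega> j \<le> \<omega> k}"
    unfolding pW_def Wdef k_def[symmetric]
    by (intro arg_cong[where f="measure (PiM {..<n} M)"] Collect_cong conj_cong refl Wset_eq[OF kn])
  have "emeasure (PiM {..<n} M) {\<omega>\<in>space (PiM {..<n} M). \<forall>j\<in>{..<n}. \<omega> j \<le> \<omega> k}
      = (\<integral>\<^sup>+y. (\<Prod>j\<in>{..<n}-{k}. emeasure (M j) {x\<in>space (M j). x \<le> y}) \<partial>M k)"
    by (rule maxprob[OF _ _ prob _ S_sets]) (use kn in \<open>auto simp: M_def\<close>)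
  also have "\<dots> = (\<integral>\<^sup>+y. ennreal (\<Prod>i\<in>{1..n}-{m}. ecdf (real i) ((1 / real n) * y)) \<partial>M k)"
  proof (rule nn_integral_cong)
    fix y
    have "(\<Prod>j\<in>{..<n}-{k}. emeasure (M j) {x\<in>space (M j). x \<le> y})
        = (\<Prod>j\<in>{..<n}-{k}. ennreal (ecdf (real (n - j) / real n) y))"
      unfolding M_def by (intro prod.cong refl emeasure_exp_le) auto
    also have "\<dots> = ennreal (\<Prod>j\<in>{..<n}-{k}. ecdf (real (n - j) / real n) y)"
      by (rule prod_ennreal) (auto intro!: ecdf_nonneg)
    also have "(\<Prod>j\<in>{..<n}-{k}. ecdf (real (n - j) / real n) y) = (\<Prod>i\<in>{1..n}-{m}. ecdf (real i / real n) y)"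
      by (rule prod.reindex_bij_witness[where i="\<lambda>i. n - i" and j="\<lambda>j. n - j"]) (use m in \<open>auto simp: k_def\<close>)
    also have "\<dots> = (\<Prod>i\<in>{1..n}-{m}. ecdf (real i) ((1 / real n) * y))"
    proof (intro prod.cong refl)
      fix i
      have "ecdf (real i / real n) y = ecdf ((1 / real n) * real i) y" by simp
      also have "\<dots> = ecdf (real i) ((1 / real n) * y)" using ecdf_scale[of "1 / real n" "real i" y] np by simp
      finally show "ecdf (real i / real n) y = ecdf (real i) ((1 / real n) * y)" .
    qed
    finally show "(\<Prod>j\<in>{..<n}-{k}. emeasure (M j) {x\<in>space (M j). x \<le> y}) = ennreal (\<Prod>i\<in>{1..n}-{m}. ecdf (real i) ((1 / real n) * y))" .
  qed
  also have "\<dots> = (\<integral>\<^sup>+y. ennreal (gp m n ((1 / real n) * y)) \<partial>M k)"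
    by (simp add: gp_def)
  also have "M k = density lborel (exponential_density ((1 / real n) * real m))"
    using m by (simp add: M_def k_def)
  also have "(\<integral>\<^sup>+y. ennreal (gp m n ((1 / real n) * y)) \<partial>density lborel (exponential_density ((1 / real n) * real m)))
      = ennreal (Eexp ((1 / real n) * real m) (\<lambda>y. gp m n ((1 / real n) * y)))"
    by (rule Eexp_nn_density[symmetric]) (use m np bnd_scale[OF bnd_gp, of m n "1 / real n"] in auto)
  also have "Eexp ((1 / real n) * real m) (\<lambda>y. gp m n ((1 / real n) * y)) = Ip m n"
    unfolding Ip_def by (rule Eexp_scale) (use m np bnd_gp in auto)
  finally show ?thesis using Ip_nonneg[of m n] m P1 by (simp add: measure_def)
qed



lemma fin_exp_max:
  fixes r :: "nat \<Rightarrow> real"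
  assumes fin: "finite J" and k: "k \<in> J" and r: "\<And>j. j \<in> J \<Longrightarrow> 0 < r j"
  shows "emeasure (PiM J (\<lambda>j. density lborel (exponential_density (r j))))
           {\<omega>\<in>space (PiM J (\<lambda>j. density lborel (exponential_density (r j)))). \<forall>j\<in>J. \<omega> j \<le> \<omega> k}
         = ennreal (Eexp (r k) (\<lambda>y. \<Prod>j\<in>J-{k}. ecdf (r j) y))"
proof -
  define M where "M j = density lborel (exponential_density (r j))" for j
  have prob: "prob_space (M j)" if "j \<in> J" for j
    using that r unfolding M_def by (intro prob_space_exponential_density) auto
  have S_sets: "{\<omega>\<in>space (PiM J M). \<forall>j\<in>J. \<omega> j \<le> \<omega> k} \<in> sets (PiM J M)"
  proof -
    have comp: "(\<lambda>\<omega>. \<omega> j) \<in> borel_measurable (PiM J M)" if "j \<in> J" for j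
      using measurable_component_singleton[of j J M] that by (simp add: M_def)
    have "{\<omega>\<in>space (PiM J M). \<omega> j \<le> \<omega> k} \<in> sets (PiM J M)" if "j \<in> J" for j
      using comp[of j] comp[OF k] that by (intro borel_measurable_le) auto
    then show ?thesis using fin by (intro sets.sets_Collect_finite_All) auto
  qed
  have "emeasure (PiM J M) {\<omega>\<in>space (PiM J M). \<forall>j\<in>J. \<omega> j \<le> \<omega> k}
      = (\<integral>\<^sup>+y. (\<Prod>j\<in>J-{k}. emeasure (M j) {x\<in>space (M j). x \<le> y}) \<partial>M k)"
    by (rule maxprob[OF fin k prob _ S_sets]) (auto simp: M_def)
  also have "\<dots> = (\<integral>\<^sup>+y. ennreal (\<Prod>j\<in>J-{k}. ecdf (r j) y) \<partial>M k)"
  proof (rule nn_integral_cong)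
    fix y
    have "(\<Prod>j\<in>J-{k}. emeasure (M j) {x\<in>space (M j). x \<le> y}) = (\<Prod>j\<in>J-{k}. ennreal (ecdf (r j) y))"
      unfolding M_def by (intro prod.cong refl emeasure_exp_le r) auto
    also have "\<dots> = ennreal (\<Prod>j\<in>J-{k}. ecdf (r j) y)"
      using r by (intro prod_ennreal) (auto intro!: ecdf_nonneg simp: less_imp_le)
    finally show "(\<Prod>j\<in>J-{k}. emeasure (M j) {x\<in>space (M j). x \<le> y}) = ennreal (\<Prod>j\<in>J-{k}. ecdf (r j) y)" .
  qed
  also have "\<dots> = ennreal (Eexp (r k) (\<lambda>y. \<Prod>j\<in>J-{k}. ecdf (r j) y))"
    unfolding M_def
  proof (rule Eexp_nn_density[symmetric])
    show "0 < r k" using r k by simp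
    show "bnd (\<lambda>y. \<Prod>j\<in>J-{k}. ecdf (r j) y)"
      unfolding bnd_def using r
      by (auto intro!: prod_nonneg prod_le_1 ecdf_nonneg ecdf_le1 simp: less_imp_le)
  qed
  finally show ?thesis unfolding M_def .
qed

lemma Sup_unbdd:
  fixes X :: "real set"
  assumes "\<not> bdd_above X"
  shows "Sup X = Sup (UNIV :: real set)"
proof -
  have 1: "(\<lambda>z. \<forall>x\<in>X. x \<le> z) = (\<lambda>z. False)"
    using assms unfolding bdd_above_def fun_eq_iff by (metis (full_types))
  have 2: "(\<lambda>z::real. \<forall>x\<in>UNIV. x \<le> z) = (\<lambda>z. False)"
    by (auto simp: fun_eq_iff not_le intro: gt_ex)
  show ?thesis unfolding Sup_real_def 1 2 ..
qed

lemma Ip_tendsto_pX: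
  assumes m: "1 \<le> m"
  shows "Ip m \<longlonglongrightarrow> pX m"
proof -
  define Mx where "Mx i = density lborel (exponential_density (real i))" for i
  define I :: "nat set" where "I = {1..}"
  define M' where "M' i = (if i \<in> I then Mx i else count_space {undefined})" for i
  interpret M': prob_space "M' i" for i
    unfolding M'_def Mx_def I_def
    by (cases "i \<in> {1..}") (auto intro!: prob_spaceI prob_space_exponential_density[THEN prob_space.emeasure_space_1])
  interpret P: product_prob_space M' I
    by unfold_locales
  have Xdef: "X_space = PiM I M'"
    unfolding X_space_def I_def M'_def Mx_def by (intro PiM_cong) auto
  have mI: "m \<in> I" using m by (simp add: I_def)
  have sp: "space X_space = space (PiM I M')" using Xdef by simp
  have comp: "(\<lambda>\<omega>. \<omega> i) \<in> borel_measurable (PiM I M')" if "i \<in> I" for i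
    using measurable_component_singleton[of i I M'] that by (simp add: M'_def Mx_def)
  define A where "A N = {\<omega>\<in>space (PiM I M'). \<forall>i\<in>{1..N+m}. \<omega> i \<le> \<omega> m}" for N
  define S where "S N = {\<omega>\<in>space (PiM {1..N+m} M'). \<forall>i\<in>{1..N+m}. \<omega> i \<le> \<omega> m}" for N
  have JI: "{1..N+m} \<subseteq> I" for N by (auto simp: I_def)
  have S_sets: "S N \<in> sets (PiM {1..N+m} M')" for N
  proof -
    have comp': "(\<lambda>\<omega>. \<omega> j) \<in> borel_measurable (PiM {1..N+m} M')" if "j \<in> {1..N+m}" for j
      using measurable_component_singleton[of j "{1..N+m}" M'] that by (simp add: M'_def Mx_def I_def)
    have "{\<omega>\<in>space (PiM {1..N+m} M'). \<omega> j \<le> \<omega> m} \<in> sets (PiM {1..N+m} M')" if "j \<in> {1..N+m}" for j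
      using comp'[of j] comp'[of m] that m by (intro borel_measurable_le) auto
    then show ?thesis unfolding S_def by (intro sets.sets_Collect_finite_All) auto
  qed
  have AS: "A N = prod_emb I M' {1..N+m} (S N)" for N
    using m unfolding A_def S_def prod_emb_def
    by (auto simp: space_PiM PiE_iff I_def extensional_def)
  have A_sets: "A N \<in> sets (PiM I M')" for N
    unfolding AS using S_sets JI by simp
  have emA: "emeasure (PiM I M') (A N) = ennreal (Ip m (N+m))" for N
  proof -
    have "emeasure (PiM I M') (A N) = emeasure (PiM {1..N+m} M') (S N)"
      unfolding AS by (rule P.emeasure_PiM_emb'[OF JI _ S_sets]) simp
    also have "PiM {1..N+m} M' = PiM {1..N+m} (\<lambda>j. density lborel (exponential_density (real j)))"
      by (intro PiM_cong) (auto simp: M'_def Mx_def I_def)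
    also have "emeasure \<dots> (S N) = ennreal (Eexp (real m) (\<lambda>y. \<Prod>j\<in>{1..N+m}-{m}. ecdf (real j) y))"
      unfolding S_def \<open>PiM {1..N+m} M' = _\<close>
      by (rule fin_exp_max) (use m in auto)
    finally show ?thesis by (simp add: Ip_def gp_def[abs_def])
  qed
  have meA: "measure (PiM I M') (A N) = Ip m (N+m)" for N
    using emA[of N] Ip_nonneg[of m "N+m"] m by (simp add: measure_def)
  have dec: "decseq A"
    unfolding decseq_def A_def by auto
  have lim1: "(\<lambda>N. measure (PiM I M') (A N)) \<longlonglongrightarrow> measure (PiM I M') (\<Inter>N. A N)"
    by (rule Lim_measure_decseq) (use A_sets dec in auto)
  define Aall where "Aall = {\<omega>\<in>space (PiM I M'). \<forall>i\<in>I. \<omega> i \<le> \<omega> m}"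
  have AA: "(\<Inter>N. A N) = Aall"
  proof (intro set_eqI iffI)
    fix \<omega> assume "\<omega> \<in> (\<Inter>N. A N)"
    then have "\<omega> \<in> space (PiM I M')" "\<And>N i. i \<in> {1..N+m} \<Longrightarrow> \<omega> i \<le> \<omega> m"
      unfolding A_def by auto
    moreover have "\<And>i. i \<in> I \<Longrightarrow> \<omega> i \<le> \<omega> m"
      using calculation(2)[of _ "_"] by (auto simp: I_def) (metis atLeastAtMost_iff le_add1)
    ultimately show "\<omega> \<in> Aall" unfolding Aall_def by auto
  qed (auto simp: A_def Aall_def I_def)
  have lim2: "Ip m \<longlonglongrightarrow> measure (PiM I M') Aall"
    using lim1 unfolding meA AA by (rule LIMSEQ_offset)
  define c where "c = Sup (UNIV :: real set)"
  define U where "U = {\<omega>\<in>space (PiM I M'). \<not> bdd_above (\<omega> ` I)}"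
  define Z where "Z = {\<omega>\<in>space (PiM I M'). \<omega> m = c}"
  have EQ: "{\<omega>\<in>space X_space. \<omega> m = (SUP i\<in>{1..}. \<omega> i)} = Aall \<union> (U \<inter> Z)"
  proof (intro set_eqI iffI)
    fix \<omega> assume w: "\<omega> \<in> {\<omega>\<in>space X_space. \<omega> m = (SUP i\<in>{1..}. \<omega> i)}"
    show "\<omega> \<in> Aall \<union> (U \<inter> Z)"
    proof (cases "bdd_above (\<omega> ` I)")
      case True
      then have "\<omega> i \<le> \<omega> m" if "i \<in> I" for i
        using w cSUP_upper[OF that True] by (simp add: I_def)
      then show ?thesis using w sp unfolding Aall_def by auto
    next
      case False
      then have "(SUP i\<in>{1..}. \<omega> i) = c" unfolding c_def I_def by (rule Sup_unbdd)
      then show ?thesis using w sp False unfolding U_def Z_def by auto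
    qed
  next
    fix \<omega> assume w: "\<omega> \<in> Aall \<union> (U \<inter> Z)"
    show "\<omega> \<in> {\<omega>\<in>space X_space. \<omega> m = (SUP i\<in>{1..}. \<omega> i)}"
    proof (cases "\<omega> \<in> Aall")
      case True
      then have "(SUP i\<in>{1..}. \<omega> i) = \<omega> m"
        unfolding Aall_def I_def using mI[unfolded I_def]
        by (intro cSup_eq_maximum) auto
      then show ?thesis using True sp unfolding Aall_def by auto
    next
      case False
      then have "\<omega> \<in> U" "\<omega> \<in> Z" using w by auto
      then have "(SUP i\<in>{1..}. \<omega> i) = c" unfolding c_def U_def I_def
        by (intro Sup_unbdd) auto
      then show ?thesis using \<open>\<omega> \<in> Z\<close> sp unfolding Z_def by auto
    qed
  qed
  have Aall_sets: "Aall \<in> sets (PiM I M')"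
  proof -
    have "{\<omega>\<in>space (PiM I M'). \<omega> i \<le> \<omega> m} \<in> sets (PiM I M')" if "i \<in> I" for i
      using comp[OF that] comp[OF mI] by (intro borel_measurable_le) auto
    then show ?thesis unfolding Aall_def by (intro sets.sets_Collect_countable_All') (auto simp: I_def)
  qed
  have Z_sets: "Z \<in> sets (PiM I M')"
    unfolding Z_def using comp[OF mI] by (intro borel_measurable_eq) auto
  have U_sets: "U \<in> sets (PiM I M')"
  proof -
    have "U = {\<omega>\<in>space (PiM I M'). \<forall>B::nat. \<exists>i\<in>I. real B < \<omega> i}"
      unfolding U_def
    proof (intro Collect_cong conj_cong refl)
      fix \<omega>
      show "(\<not> bdd_above (\<omega> ` I)) = (\<forall>B::nat. \<exists>i\<in>I. real B < \<omega> i)"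
      proof
        assume nb: "\<not> bdd_above (\<omega> ` I)"
        show "\<forall>B::nat. \<exists>i\<in>I. real B < \<omega> i"
        proof
          fix B :: nat
          have "\<not> (\<forall>i\<in>I. \<omega> i \<le> real B)"
          proof
            assume "\<forall>i\<in>I. \<omega> i \<le> real B"
            then have "bdd_above (\<omega> ` I)" by (intro bdd_aboveI2) auto
            with nb show False by simp
          qed
          then show "\<exists>i\<in>I. real B < \<omega> i" by (simp add: not_le)
        qed
      next
        assume a: "\<forall>B::nat. \<exists>i\<in>I. real B < \<omega> i"
        show "\<not> bdd_above (\<omega> ` I)"
        proof
          assume "bdd_above (\<omega> ` I)"
          then obtain b where b: "\<And>i. i \<in> I \<Longrightarrow> \<omega> i \<le> b" by (auto simp: bdd_above_def)
          obtain B :: nat where "b < real B" using reals_Archimedean2 by blast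
          from a obtain i where "i \<in> I" "real B < \<omega> i" by blast
          with b[of i] \<open>b < real B\<close> show False by simp
        qed
      qed
    qed
    also have "\<dots> \<in> sets (PiM I M')"
    proof (intro sets.sets_Collect_countable_All sets.sets_Collect_countable_Ex')
      fix B :: nat and i assume "i \<in> I"
      show "{\<omega>\<in>space (PiM I M'). real B < \<omega> i} \<in> sets (PiM I M')"
        using comp[OF \<open>i \<in> I\<close>] by (intro borel_measurable_less) auto
    qed (auto simp: I_def)
    finally show ?thesis .
  qed
  have Z_null: "Z \<in> null_sets (PiM I M')"
  proof -
    have "emeasure (PiM I M') Z = emeasure (M' m) {c}"
      unfolding Z_def using P.emeasure_PiM_Collect_single[OF mI, of "{c}"]
      by (simp add: M'_def Mx_def mI)
    also have "\<dots> = emeasure (density lborel (exponential_density (real m))) {c}"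
      using mI by (simp add: M'_def Mx_def)
    also have "\<dots> = (\<integral>\<^sup>+x. ennreal (exponential_density (real m) x) * indicator {c} x \<partial>lborel)"
      by (rule emeasure_density) auto
    also have "\<dots> = (\<integral>\<^sup>+x. 0 \<partial>lborel)"
    proof -
      have "AE x in lborel. ennreal (exponential_density (real m) x) * indicator {c} x = 0"
        using AE_lborel_singleton[of c] by (rule eventually_mono) simp
      from nn_integral_cong_AE[OF this] show ?thesis by (simp add: mult_ac)
    qed
    finally show ?thesis using Z_sets by (auto simp: null_sets_def)
  qed
  have UZ_null: "U \<inter> Z \<in> null_sets (PiM I M')"
    by (rule null_sets_subset[OF Z_null]) (use U_sets Z_sets in auto)
  have "pX m = measure X_space (Aall \<union> (U \<inter> Z))"
    unfolding pX_def EQ ..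
  also have "\<dots> = measure (PiM I M') (Aall \<union> (U \<inter> Z))"
    by (simp only: Xdef)
  also have "\<dots> = measure (PiM I M') Aall"
    by (rule measure_Un_null_set[OF Aall_sets UZ_null])
  finally show ?thesis using lim2 by simp
qed



lemma Ip_decseq: "1 \<le> m \<Longrightarrow> decseq (Ip m)"
  unfolding decseq_def using Ip_anti by auto

lemma pX_le_Ip: "1 \<le> m \<Longrightarrow> pX m \<le> Ip m n"
  using decseq_ge[OF Ip_decseq Ip_tendsto_pX] by auto

lemma Ip_minus_pX:
  assumes m: "1 \<le> m" "m \<le> n" and n: "2 \<le> n"
  shows "Ip m n - pX m \<le> 2 * real m / (real m + (real n + 1))"
proof -
  have "(\<lambda>N. Ip m n - Ip m N) \<longlonglongrightarrow> Ip m n - pX m"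
    using Ip_tendsto_pX[OF m(1)] by (intro tendsto_intros)
  moreover have "\<exists>N0. \<forall>N\<ge>N0. Ip m n - Ip m N \<le> 2 * real m / (real m + (real n + 1))"
    using Ip_diff[OF m n] by blast
  ultimately show ?thesis by (rule LIMSEQ_le_const2)
qed

lemma partA:
  assumes m: "1 \<le> m"
  shows "(\<lambda>n. pW n m - pX m) \<in> O(\<lambda>n. 1 / real n)"
proof (rule bigoI[where c = "2 * real m"])
  show "eventually (\<lambda>n. norm (pW n m - pX m) \<le> 2 * real m * norm (1 / real n)) at_top"
    unfolding eventually_at_top_linorder
  proof (intro exI allI impI)
    fix n assume n: "max m 2 \<le> n"
    then have mn: "m \<le> n" "2 \<le> n" by auto
    have "pW n m = Ip m n" using pW_eq m mn by simp
    moreover have "0 \<le> Ip m n - pX m" using pX_le_Ip[OF m, of n] by simp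
    moreover have "Ip m n - pX m \<le> 2 * real m / (real m + (real n + 1))"
      by (rule Ip_minus_pX) (use m mn in auto)
    moreover have "2 * real m / (real m + (real n + 1)) \<le> 2 * real m / real n"
      using mn m by (intro divide_left_mono) auto
    ultimately show "norm (pW n m - pX m) \<le> 2 * real m * norm (1 / real n)"
      using mn by simp
  qed
qed



lemma exp_lam_pow:
  assumes p: "0 < p" "p < 1"
  shows "exp (- (- ln (1 - p)) * real r) = (1 - p) ^ r"
proof -
  have "exp (- (- ln (1 - p)) * real r) = exp (real r * ln (1 - p))" by (simp add: mult_ac)
  also have "\<dots> = exp (ln (1 - p)) ^ r" by (rule exp_of_nat_mult)
  also have "exp (ln (1 - p)) = 1 - p" using p by simp
  finally show ?thesis .
qed

lemma interval_mass:
  assumes p: "0 < p" "p < 1"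
  defines "lam \<equiv> - ln (1 - p)"
  shows "emeasure (density lborel (exponential_density lam)) {real r<..real r + 1} = ennreal ((1 - p)^r * p)"
proof -
  have lam: "0 < lam" using p unfolding lam_def by simp
  let ?D = "density lborel (exponential_density lam)"
  interpret prob_space ?D using prob_space_exponential_density[OF lam] .
  have eq: "{real r<..real r + 1} = {..real r + 1} - {..real r}" by auto
  have "emeasure ?D {real r<..real r + 1} = emeasure ?D {..real r + 1} - emeasure ?D {..real r}"
    unfolding eq by (rule emeasure_Diff) auto
  also have "\<dots> = ennreal (erlang_CDF 0 lam (real r + 1)) - ennreal (erlang_CDF 0 lam (real r))"
    using emeasure_erlang_density[OF lam] by simp
  also have "\<dots> = ennreal ((1 - (1 - p)^(r+1)) - (1 - (1 - p)^r))"
  proof -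
    have a: "erlang_CDF 0 lam (real r + 1) = 1 - (1 - p)^(r+1)"
      using exp_lam_pow[OF p, of "r+1"] unfolding erlang_CDF_0 lam_def by (simp add: mult_ac add.commute)
    have b: "erlang_CDF 0 lam (real r) = 1 - (1 - p)^r"
      using exp_lam_pow[OF p, of "r"] unfolding erlang_CDF_0 lam_def by (simp add: mult_ac)
    have "0 \<le> 1 - (1 - p)^r" using p by (simp add: power_le_one)
    then show ?thesis unfolding a b by (rule ennreal_minus)
  qed
  also have "(1 - (1 - p)^(r+1)) - (1 - (1 - p)^r) = (1 - p)^r * p" by (simp add: algebra_simps)
  finally show ?thesis .
qed

lemma SI:
  assumes p: "0 < p" "p < 1" and h: "bnd h" and hm: "\<And>x y. x \<le> y \<Longrightarrow> h x \<le> h y"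
  defines "lam \<equiv> - ln (1 - p)"
  defines "G \<equiv> (\<Sum>r. ennreal ((1 - p)^r * p * h (real (Suc r))))"
  shows "ennreal (Eexp lam h) \<le> G" and "ennreal (1 - p) * G \<le> ennreal (Eexp lam h)"
proof -
  have lam: "0 < lam" using p unfolding lam_def by simp
  have hb[measurable]: "h \<in> borel_measurable borel" and h01: "\<And>x. 0 \<le> h x" "\<And>x. h x \<le> 1"
    using h by (auto simp: bnd_def)
  define F where "F x = ennreal (exponential_density lam x * h x)" for x
  have Fm[measurable]: "F \<in> borel_measurable borel" unfolding F_def by measurable
  define B where "B r = {real r<..real r + 1}" for r :: nat
  have meas: "(\<lambda>x. ennreal (exponential_density lam x) * indicator (B r) x) \<in> borel_measurable borel" for r
    unfolding B_def by measurable
  define W where "W r = (\<integral>\<^sup>+x. F x * indicator (B r) x \<partial>lborel)" for r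
  have mass: "(\<integral>\<^sup>+x. ennreal (exponential_density lam x) * indicator (B r) x \<partial>lborel) = ennreal ((1 - p)^r * p)" for r
    using interval_mass[OF p, of r] unfolding lam_def[symmetric] B_def
    by (subst (asm) emeasure_density) auto
  have E1: "ennreal (Eexp lam h) = (\<integral>\<^sup>+x. F x \<partial>lborel)"
    unfolding F_def by (rule Eexp_nn[OF lam h])
  also have "\<dots> = (\<integral>\<^sup>+x. F x * indicator {0<..} x \<partial>lborel)"
  proof (rule nn_integral_cong_AE)
    show "AE x in lborel. F x = F x * indicator {0<..} x"
      using AE_lborel_singleton[of 0]
      by (rule eventually_mono) (auto simp: F_def exponential_density_def indicator_def)
  qed
  also have "\<dots> = (\<integral>\<^sup>+x. (\<Sum>r. F x * indicator (B r) x) \<partial>lborel)"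
  proof (rule nn_integral_cong)
    fix x :: real
    have dj: "disjoint_family B"
      unfolding disjoint_family_on_def B_def
    proof (intro ballI impI)
      fix i j :: nat assume "i \<noteq> j"
      then show "{real i<..real i + 1} \<inter> {real j<..real j + 1} = {}"
        by (cases "i < j") (auto simp: less_iff_Suc_add)
    qed
    have U: "(\<Union>r. B r) = {0<..}"
    proof (intro set_eqI iffI)
      fix x :: real assume "x \<in> {0<..}"
      then have x: "0 < x" by simp
      define r where "r = nat (\<lceil>x\<rceil> - 1)"
      have "real r < x" "x \<le> real r + 1"
        using x unfolding r_def by linarith+
      then show "x \<in> (\<Union>r. B r)" unfolding B_def by auto
    qed (auto simp: B_def)
    have "F x * indicator {0<..} x = F x * (\<Sum>r. indicator (B r) x)"
      unfolding suminf_indicator[OF dj] U ..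
    also have "\<dots> = (\<Sum>r. F x * indicator (B r) x)" by simp
    finally show "F x * indicator {0<..} x = (\<Sum>r. F x * indicator (B r) x)" .
  qed
  also have "\<dots> = (\<Sum>r. W r)"
    unfolding W_def by (rule nn_integral_suminf) (auto simp: B_def)
  finally have EW: "ennreal (Eexp lam h) = (\<Sum>r. W r)" .
  have Wup: "W r \<le> ennreal ((1 - p)^r * p * h (real (Suc r)))" for r
  proof -
    have "W r \<le> (\<integral>\<^sup>+x. ennreal (h (real (Suc r))) * (ennreal (exponential_density lam x) * indicator (B r) x) \<partial>lborel)"
      unfolding W_def
    proof (rule nn_integral_mono)
      fix x show "F x * indicator (B r) x \<le> ennreal (h (real (Suc r))) * (ennreal (exponential_density lam x) * indicator (B r) x)"
      proof (cases "x \<in> B r")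
        case True
        then have "h x \<le> h (real (Suc r))" using hm by (auto simp: B_def)
        then have *: "exponential_density lam x * h x \<le> exponential_density lam x * h (real (Suc r))"
          by (intro mult_left_mono) (use exponential_density_nonneg[OF lam] in auto)
        have "F x * indicator (B r) x = ennreal (exponential_density lam x * h x)" using True by (simp add: F_def)
        also have "\<dots> \<le> ennreal (h (real (Suc r)) * exponential_density lam x)"
          using * by (intro ennreal_leI) (simp add: mult.commute)
        also have "\<dots> = ennreal (h (real (Suc r))) * (ennreal (exponential_density lam x) * indicator (B r) x)"
          using True h01 by (simp add: ennreal_mult')
        finally show ?thesis .
      qed simp
    qed
    also have "\<dots> = ennreal (h (real (Suc r))) * ennreal ((1 - p)^r * p)"
      using meas by (subst nn_integral_cmult) (auto simp: mass)
    also have "\<dots> = ennreal ((1 - p)^r * p * h (real (Suc r)))"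
      using h01 p by (subst ennreal_mult[symmetric]) (auto simp: mult_ac)
    finally show ?thesis .
  qed
  have Wlo: "ennreal ((1 - p)^r * p * h (real r)) \<le> W r" for r
  proof -
    have "ennreal ((1 - p)^r * p * h (real r)) = ennreal (h (real r)) * ennreal ((1 - p)^r * p)"
      using h01 p by (subst ennreal_mult[symmetric]) (auto simp: mult_ac)
    also have "\<dots> = (\<integral>\<^sup>+x. ennreal (h (real r)) * (ennreal (exponential_density lam x) * indicator (B r) x) \<partial>lborel)"
      using meas by (subst nn_integral_cmult) (auto simp: mass)
    also have "\<dots> \<le> W r"
      unfolding W_def
    proof (rule nn_integral_mono)
      fix x show "ennreal (h (real r)) * (ennreal (exponential_density lam x) * indicator (B r) x) \<le> F x * indicator (B r) x"
      proof (cases "x \<in> B r")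
        case True
        then have "h (real r) \<le> h x" using hm by (auto simp: B_def)
        then have *: "exponential_density lam x * h (real r) \<le> exponential_density lam x * h x"
          by (intro mult_left_mono) (use exponential_density_nonneg[OF lam] in auto)
        have "ennreal (h (real r)) * (ennreal (exponential_density lam x) * indicator (B r) x) = ennreal (h (real r) * exponential_density lam x)"
          using True h01 by (simp add: ennreal_mult')
        also have "\<dots> \<le> ennreal (exponential_density lam x * h x)"
          using * by (intro ennreal_leI) (simp add: mult.commute)
        also have "\<dots> = F x * indicator (B r) x" using True by (simp add: F_def)
        finally show ?thesis .
      qed simp
    qed
    finally show ?thesis .
  qed
  show "ennreal (Eexp lam h) \<le> G"
    unfolding EW G_def by (intro suminf_le Wup) auto
  have "ennreal (1 - p) * G = (\<Sum>r. ennreal ((1 - p)^(Suc r) * p * h (real (Suc r))))"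
    unfolding G_def ennreal_suminf_cmult[symmetric]
    by (intro suminf_cong) (use p h01 in \<open>auto simp: ennreal_mult'[symmetric] mult_ac\<close>)
  also have "\<dots> \<le> (\<Sum>r. W (Suc r))"
    by (intro suminf_le Wlo) auto
  also have "\<dots> \<le> (\<Sum>r. W r)"
    using suminf_offset[of "W" 1] by (simp add: add_increasing2)
  finally show "ennreal (1 - p) * G \<le> ennreal (Eexp lam h)" unfolding EW .
qed



lemma geom_sum:
  fixes p :: real
  shows "(\<Sum>r<y. (1 - p)^r * p) = 1 - (1 - p)^y"
  by (induction y) (auto simp: algebra_simps)

lemma geomD_cdf:
  assumes p: "0 < p" "p \<le> 1"
  shows "emeasure (measure_pmf (map_pmf Suc (geometric_pmf p))) {x\<in>space (measure_pmf (map_pmf Suc (geometric_pmf p))). x \<le> y}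
         = ennreal (1 - (1 - p)^y)"
proof -
  have "Suc -` {x. x \<le> y} = {..<y}" by auto
  then have "measure (measure_pmf (map_pmf Suc (geometric_pmf p))) {x. x \<le> y} = (\<Sum>r<y. (1 - p)^r * p)"
    using p by (simp add: measure_measure_pmf_finite)
  then show ?thesis
    by (simp add: measure_pmf.emeasure_eq_measure geom_sum)
qed

lemma nn_integral_geomD:
  assumes p: "0 < p" "p \<le> 1"
  shows "(\<integral>\<^sup>+y. f y \<partial>measure_pmf (map_pmf Suc (geometric_pmf p))) = (\<Sum>r. ennreal ((1 - p)^r * p) * f (Suc r))"
  unfolding nn_integral_map_pmf using p by (simp add: nn_integral_measure_pmf nn_integral_count_space_nat)

lemma prodW:
  assumes m: "1 \<le> m" "m \<le> n"
  shows "(\<Prod>j\<in>{..<n}-{n-m}. ecdf (real (n - j) / real n) y) = gp m n ((1 / real n) * y)"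
proof -
  have np: "0 < real n" using m by simp
  have "(\<Prod>j\<in>{..<n}-{n-m}. ecdf (real (n - j) / real n) y) = (\<Prod>i\<in>{1..n}-{m}. ecdf (real i / real n) y)"
    by (rule prod.reindex_bij_witness[where i="\<lambda>i. n - i" and j="\<lambda>j. n - j"]) (use m in auto)
  also have "\<dots> = (\<Prod>i\<in>{1..n}-{m}. ecdf (real i) ((1 / real n) * y))"
  proof (intro prod.cong refl)
    fix i
    have "ecdf (real i / real n) y = ecdf ((1 / real n) * real i) y" by simp
    also have "\<dots> = ecdf (real i) ((1 / real n) * y)" using ecdf_scale[of "1 / real n" "real i" y] np by simp
    finally show "ecdf (real i / real n) y = ecdf (real i) ((1 / real n) * y)" .
  qed
  finally show ?thesis by (simp add: gp_def)
qed

definition PrN :: "nat \<Rightarrow> nat \<Rightarrow> nat \<Rightarrow> real" where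
  "PrN n m y = (\<Prod>j\<in>{..<n}-{n-m}. 1 - (1 - real (n - j) / real n)^y)"

lemma pD_sum:
  assumes m: "1 \<le> m" "m \<le> n"
  shows "ennreal (pD n m) = (\<Sum>r. ennreal ((1 - real m / real n)^r * (real m / real n) * PrN n m (Suc r)))"
proof -
  define k where "k = n - m"
  have kn: "k < n" using m by (simp add: k_def)
  define M where "M j = measure_pmf (map_pmf Suc (geometric_pmf (real (n - j) / real n)))" for j
  have Ddef: "D_space n = PiM {..<n} M" unfolding D_space_def M_def ..
  have pj: "0 < real (n - j) / real n" "real (n - j) / real n \<le> 1" if "j < n" for j
    using that by auto
  have prob: "prob_space (M j)" if "j \<in> {..<n}" for j
    unfolding M_def by (rule prob_space_measure_pmf)
  have comp: "(\<lambda>\<omega>. \<omega> j) \<in> measurable (PiM {..<n} M) (count_space UNIV)" if "j < n" for j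
    using measurable_component_singleton[of j "{..<n}" M] that
    by (simp add: M_def measurable_cong_sets[OF refl sets_measure_pmf_count_space])
  have S_sets: "{\<omega>\<in>space (PiM {..<n} M). \<forall>j\<in>{..<n}. \<omega> j \<le> \<omega> k} \<in> sets (PiM {..<n} M)"
  proof -
    have "{\<omega>\<in>space (PiM {..<n} M). \<omega> j \<le> \<omega> k} \<in> sets (PiM {..<n} M)" if "j \<in> {..<n}" for j
    proof -
      have "(\<lambda>\<omega>. (\<omega> j, \<omega> k)) \<in> measurable (PiM {..<n} M) (count_space UNIV \<Otimes>\<^sub>M count_space UNIV)"
        using comp[of j] comp[OF kn] that by (intro measurable_Pair) auto
      then have pm: "(\<lambda>\<omega>. (\<omega> j, \<omega> k)) \<in> measurable (PiM {..<n} M) (count_space (UNIV :: (nat \<times> nat) set))"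
        by (simp add: pair_measure_countable)
      have "{\<omega>\<in>space (PiM {..<n} M). \<omega> j \<le> \<omega> k} = (\<lambda>\<omega>. (\<omega> j, \<omega> k)) -` {q. fst q \<le> snd q} \<inter> space (PiM {..<n} M)"
        by auto
      also have "\<dots> \<in> sets (PiM {..<n} M)"
        by (rule measurable_sets[OF pm]) simp
      finally show ?thesis .
    qed
    then show ?thesis by (intro sets.sets_Collect_finite_All) auto
  qed
  have "ennreal (pD n m) = emeasure (PiM {..<n} M) {\<omega>\<in>space (PiM {..<n} M). \<forall>j\<in>{..<n}. \<omega> j \<le> \<omega> k}"
  proof -
    interpret P: prob_space "PiM {..<n} M" by (rule prob_space_PiM) (use prob in auto)
    have "pD n m = measure (PiM {..<n} M) {\<omega>\<in>space (PiM {..<n} M). \<forall>j\<in>{..<n}. \<omega> j \<le> \<omega> k}"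
      unfolding pD_def Ddef k_def[symmetric]
      by (intro arg_cong[where f="measure (PiM {..<n} M)"] Collect_cong conj_cong refl Wset_eq[OF kn])
    then show ?thesis by (simp add: P.emeasure_eq_measure)
  qed
  also have "\<dots> = (\<integral>\<^sup>+y. (\<Prod>j\<in>{..<n}-{k}. emeasure (M j) {x\<in>space (M j). x \<le> y}) \<partial>M k)"
    by (rule maxprob[OF _ _ prob _ S_sets]) (use kn in \<open>auto simp: M_def\<close>)
  also have "\<dots> = (\<integral>\<^sup>+y. ennreal (PrN n m y) \<partial>M k)"
  proof (rule nn_integral_cong)
    fix y
    have "(\<Prod>j\<in>{..<n}-{k}. emeasure (M j) {x\<in>space (M j). x \<le> y})
        = (\<Prod>j\<in>{..<n}-{k}. ennreal (1 - (1 - real (n - j) / real n)^y))"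
      unfolding M_def by (intro prod.cong refl geomD_cdf pj) auto
    also have "\<dots> = ennreal (PrN n m y)"
      unfolding PrN_def k_def[symmetric]
      by (rule prod_ennreal) (auto intro!: power_le_one)
    finally show "(\<Prod>j\<in>{..<n}-{k}. emeasure (M j) {x\<in>space (M j). x \<le> y}) = ennreal (PrN n m y)" .
  qed
  also have "\<dots> = (\<Sum>r. ennreal ((1 - real m / real n)^r * (real m / real n)) * ennreal (PrN n m (Suc r)))"
    unfolding M_def using m by (subst nn_integral_geomD) (auto simp: k_def)
  also have "\<dots> = (\<Sum>r. ennreal ((1 - real m / real n)^r * (real m / real n) * PrN n m (Suc r)))"
    using m by (intro suminf_cong) (auto simp: ennreal_mult'[symmetric])
  finally show ?thesis .
qed



lemma ecdf_nat: "0 \<le> r \<Longrightarrow> ecdf r (real y) = 1 - exp (- r) ^ y"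
  unfolding ecdf_def by (simp add: exp_of_nat_mult[symmetric] mult_ac)

lemma PrN_lower:
  assumes m: "1 \<le> m" "m \<le> n"
  shows "gp m n ((1 / real n) * real y) \<le> PrN n m y"
proof -
  have "gp m n ((1 / real n) * real y) = (\<Prod>j\<in>{..<n}-{n-m}. ecdf (real (n - j) / real n) (real y))"
    using prodW[OF m] by simp
  also have "\<dots> \<le> PrN n m y"
    unfolding PrN_def
  proof (rule prod_mono)
    fix j assume j: "j \<in> {..<n}-{n-m}"
    define q where "q = real (n - j) / real n"
    have q: "0 \<le> q" "q \<le> 1" using j by (auto simp: q_def)
    have "(1 - q)^y \<le> exp (- q)^y"
      using q by (intro power_mono) (auto simp: exp_ge_add_one_self[of "-q", simplified])
    then have "ecdf q (real y) \<le> 1 - (1 - q)^y" using q by (simp add: ecdf_nat)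
    then show "0 \<le> ecdf (real (n - j) / real n) (real y) \<and> ecdf (real (n - j) / real n) (real y) \<le> 1 - (1 - real (n - j) / real n) ^ y"
      using q ecdf_nonneg[OF q(1)] unfolding q_def by simp
  qed
  finally show ?thesis .
qed

lemma key_exp:
  assumes i: "1 \<le> i" "i \<le> K" and K: "K < n"
  shows "exp (- real i / real (n - K)) \<le> 1 - real i / real n"
proof -
  define u where "u = 1 - real i / real n"
  have n: "0 < real n" using K by simp
  have u: "0 < u" unfolding u_def using i K n by (simp add: field_simps)
  have "ln (1 / u) \<le> 1 / u - 1" using u by (intro ln_le_minus_one) auto
  then have lnu: "1 - 1 / u \<le> ln u" using u by (simp add: ln_div)
  have "1 - 1 / u = - real i / (real n - real i)"
    unfolding u_def using i K n by (simp add: field_simps)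
  moreover have "- real i / real (n - K) \<le> - real i / (real n - real i)"
    using i K by (simp add: of_nat_diff frac_le)
  ultimately have "- real i / real (n - K) \<le> ln u" using lnu by simp
  then have e1: "exp (- real i / real (n - K)) \<le> exp (ln u)" by (simp only: exp_le_cancel_iff)
  have e2: "exp (ln u) = u" using u by simp
  have "exp (- real i / real (n - K)) \<le> u" using e1 e2 by simp
  then show ?thesis unfolding u_def .
qed

lemma PrN_upper:
  assumes m: "1 \<le> m" "m \<le> K" and K: "K < n"
  shows "PrN n m y \<le> gp m K ((1 / real (n - K)) * real y)"
proof -
  have f01: "0 \<le> 1 - (1 - real (n - j) / real n)^y \<and> 1 - (1 - real (n - j) / real n)^y \<le> 1" if "j < n" for j
    using that by (auto intro!: power_le_one)
  have "PrN n m y \<le> (\<Prod>j\<in>{n-K..<n}-{n-m}. 1 - (1 - real (n - j) / real n)^y)"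
    unfolding PrN_def by (rule prod_subset_le) (use f01 in auto)
  also have "\<dots> = (\<Prod>i\<in>{1..K}-{m}. 1 - (1 - real i / real n)^y)"
    by (rule prod.reindex_bij_witness[where i="\<lambda>i. n - i" and j="\<lambda>j. n - j"]) (use m K in auto)
  also have "\<dots> \<le> (\<Prod>i\<in>{1..K}-{m}. ecdf (real i) ((1 / real (n - K)) * real y))"
  proof (rule prod_mono)
    fix i assume i: "i \<in> {1..K}-{m}"
    have "exp (- real i / real (n - K)) ^ y \<le> (1 - real i / real n) ^ y"
      by (intro power_mono key_exp) (use i K in auto)
    moreover have "ecdf (real i) ((1 / real (n - K)) * real y) = 1 - exp (- real i / real (n - K)) ^ y"
      unfolding ecdf_def using K by (simp add: exp_of_nat_mult[symmetric] mult_ac)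
    moreover have "0 \<le> 1 - (1 - real i / real n)^y"
      using i K by (auto intro!: power_le_one)
    ultimately show "0 \<le> 1 - (1 - real i / real n)^y \<and> 1 - (1 - real i / real n)^y \<le> ecdf (real i) ((1 / real (n - K)) * real y)"
      by simp
  qed
  finally show ?thesis by (simp add: gp_def)
qed

lemma lam_bounds:
  fixes p :: real
  assumes p: "0 < p" "p < 1"
  shows "p \<le> - ln (1 - p)" "- ln (1 - p) \<le> p / (1 - p)"
proof -
  have "ln (1 - p) \<le> (1 - p) - 1" using ln_le_minus_one[of "1 - p"] p by simp
  then show "p \<le> - ln (1 - p)" by simp
  have "ln (1 / (1 - p)) \<le> 1 / (1 - p) - 1" using ln_le_minus_one[of "1 / (1 - p)"] p by simp
  then show "- ln (1 - p) \<le> p / (1 - p)" using p by (simp add: ln_div field_simps)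
qed

lemma gp_scaled_ok:
  assumes "0 < a"
  shows "bnd (\<lambda>x. gp m N (a * x))" "\<And>x y. x \<le> y \<Longrightarrow> gp m N (a * x) \<le> gp m N (a * y)"
  using bnd_scale[OF bnd_gp] assms by (auto intro!: gp_mono)

lemma pD_nonneg: "0 \<le> pD n m"
  unfolding pD_def by (rule measure_nonneg)

lemma pD_lower:
  assumes m: "1 \<le> m" "m < n"
  shows "Eexp (real n * (- ln (1 - real m / real n))) (gp m n) \<le> pD n m"
proof -
  define p where "p = real m / real n"
  have p: "0 < p" "p < 1" using m by (auto simp: p_def)
  define lam where "lam = - ln (1 - p)"
  have np: "0 < real n" using m by simp
  have lam: "0 < lam" using p by (simp add: lam_def)
  define h where "h x = gp m n ((1 / real n) * x)" for x
  have h: "bnd h" "\<And>x y. x \<le> y \<Longrightarrow> h x \<le> h y" unfolding h_def using gp_scaled_ok[of "1 / real n"] np by auto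
  have "ennreal (Eexp lam h) \<le> (\<Sum>r. ennreal ((1 - p)^r * p * h (real (Suc r))))"
    unfolding lam_def by (rule SI(1)[OF p h])
  also have "\<dots> \<le> (\<Sum>r. ennreal ((1 - p)^r * p * PrN n m (Suc r)))"
  proof (intro suminf_le ennreal_leI mult_left_mono summableI)
    fix r show "h (real (Suc r)) \<le> PrN n m (Suc r)" unfolding h_def
      using PrN_lower[of m n "Suc r"] m by simp
    show "0 \<le> (1 - p)^r * p" using p by simp
  qed
  also have "\<dots> = ennreal (pD n m)" unfolding p_def using pD_sum[of m n] m by simp
  finally have "Eexp lam h \<le> pD n m"
    using ennreal_le_iff[OF pD_nonneg[of n m]] by simp
  moreover have "Eexp lam h = Eexp (real n * lam) (gp m n)"
  proof -
    have "Eexp ((1 / real n) * (real n * lam)) (\<lambda>x. gp m n ((1 / real n) * x)) = Eexp (real n * lam) (gp m n)"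
      by (rule Eexp_scale) (use np lam bnd_gp in auto)
    then show ?thesis using np by (simp add: h_def[abs_def])
  qed
  ultimately show ?thesis by (simp add: lam_def p_def)
qed

lemma pD_upper:
  assumes m: "1 \<le> m" "m \<le> K" and K: "K < n"
  shows "(1 - real m / real n) * pD n m \<le> Eexp (real (n - K) * (- ln (1 - real m / real n))) (gp m K)"
proof -
  define p where "p = real m / real n"
  have p: "0 < p" "p < 1" using m K by (auto simp: p_def)
  define lam where "lam = - ln (1 - p)"
  have nK: "0 < real (n - K)" using K by simp
  have lam: "0 < lam" using p by (simp add: lam_def)
  define h where "h x = gp m K ((1 / real (n - K)) * x)" for x
  have h: "bnd h" "\<And>x y. x \<le> y \<Longrightarrow> h x \<le> h y" unfolding h_def using gp_scaled_ok[of "1 / real (n - K)"] nK by auto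
  have "ennreal (1 - p) * ennreal (pD n m) = ennreal (1 - p) * (\<Sum>r. ennreal ((1 - p)^r * p * PrN n m (Suc r)))"
    unfolding p_def using pD_sum[of m n] m K by simp
  also have "\<dots> \<le> ennreal (1 - p) * (\<Sum>r. ennreal ((1 - p)^r * p * h (real (Suc r))))"
  proof (intro mult_left_mono suminf_le ennreal_leI mult_left_mono summableI)
    fix r show "PrN n m (Suc r) \<le> h (real (Suc r))" unfolding h_def
      using PrN_upper[OF m K, of "Suc r"] by simp
    show "0 \<le> (1 - p)^r * p" using p by simp
  qed simp
  also have "\<dots> \<le> ennreal (Eexp lam h)"
    unfolding lam_def by (rule SI(2)[OF p h])
  moreover have "ennreal (1 - p) * ennreal (pD n m) = ennreal ((1 - p) * pD n m)"
    using p pD_nonneg[of n m] by (simp add: ennreal_mult)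
  ultimately have "ennreal ((1 - p) * pD n m) \<le> ennreal (Eexp lam h)" by simp
  then have "(1 - p) * pD n m \<le> Eexp lam h"
    using ennreal_le_iff[OF Eexp_nonneg[OF lam h(1)]] by simp
  moreover have "Eexp lam h = Eexp (real (n - K) * lam) (gp m K)"
  proof -
    have "Eexp ((1 / real (n - K)) * (real (n - K) * lam)) (\<lambda>x. gp m K ((1 / real (n - K)) * x)) = Eexp (real (n - K) * lam) (gp m K)"
      by (rule Eexp_scale) (use nK lam bnd_gp in auto)
    then show ?thesis using nK by (simp add: h_def[abs_def])
  qed
  ultimately show ?thesis by (simp add: lam_def p_def)
qed



lemma pD_le1: "pD n m \<le> 1"
proof -
  interpret P: prob_space "D_space n"
    unfolding D_space_def by (rule prob_space_PiM) (rule prob_space_measure_pmf)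
  show ?thesis unfolding pD_def by (rule P.prob_le_1)
qed

lemma pD_lower2:
  assumes m: "1 \<le> m" "m < n"
  shows "pX m - real m / (real n - real m) \<le> pD n m"
proof -
  define p where "p = real m / real n"
  have p: "0 < p" "p < 1" using m by (auto simp: p_def)
  define c where "c = real n * (- ln (1 - p))"
  have n: "0 < real n" "real m < real n" using m by auto
  have mp: "0 < real m" using m by simp
  have c1: "real m \<le> c" using lam_bounds(1)[OF p] n unfolding c_def p_def
    by (simp add: field_simps)
  have "c \<le> real n * (p / (1 - p))" using lam_bounds(2)[OF p] n unfolding c_def
    by (intro mult_left_mono) auto
  also have "real n * (p / (1 - p)) = real m * real n / (real n - real m)"
    unfolding p_def using n by (simp add: field_simps)
  finally have c2: "c \<le> real m * real n / (real n - real m)" .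
  have cpos: "0 < c" using c1 mp by simp
  have "\<bar>Eexp c (gp m n) - Eexp (real m) (gp m n)\<bar> \<le> \<bar>c - real m\<bar> / real m"
    by (rule Eexp_close[OF mp cpos bnd_gp])
  moreover have "\<bar>c - real m\<bar> / real m \<le> real m / (real n - real m)"
  proof -
    have "\<bar>c - real m\<bar> = c - real m" using c1 by simp
    also have "\<dots> \<le> real m * real n / (real n - real m) - real m" using c2 by simp
    also have "\<dots> = real m * real m / (real n - real m)" using n by (simp add: field_simps)
    finally show ?thesis using mp by (simp add: divide_le_eq field_simps)
  qed
  moreover have "Eexp c (gp m n) \<le> pD n m"
    using pD_lower[OF m] unfolding c_def p_def .
  moreover have "pX m \<le> Eexp (real m) (gp m n)"
    using pX_le_Ip[OF m(1), of n] by (simp add: Ip_def)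
  ultimately show ?thesis by linarith
qed

lemma pD_upper2:
  assumes m: "1 \<le> m" "m \<le> K" and K: "K < n"
  shows "pD n m \<le> Ip m K + (real K + real m) / real n"
proof -
  define p where "p = real m / real n"
  have p: "0 < p" "p < 1" using m K by (auto simp: p_def)
  define c where "c = real (n - K) * (- ln (1 - p))"
  have n: "0 < real n" "real m < real n" "real K < real n" using m K by auto
  have mp: "0 < real m" using m by simp
  have nK: "real (n - K) = real n - real K" using K by simp
  have c1: "(real n - real K) * p \<le> c" using lam_bounds(1)[OF p] n unfolding c_def nK
    by (intro mult_left_mono) auto
  have "c \<le> (real n - real K) * (p / (1 - p))" using lam_bounds(2)[OF p] n unfolding c_def nK
    by (intro mult_left_mono) auto
  also have "(real n - real K) * (p / (1 - p)) = real m * (real n - real K) / (real n - real m)"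
    unfolding p_def using n by (simp add: field_simps)
  also have "\<dots> \<le> real m * (real n - real m) / (real n - real m)"
    using m n by (intro divide_right_mono mult_left_mono) auto
  also have "\<dots> = real m" using n by simp
  finally have c2: "c \<le> real m" .
  have cpos: "0 < c" using c1 n p by (smt (verit) mult_pos_pos)
  have "\<bar>Eexp c (gp m K) - Eexp (real m) (gp m K)\<bar> \<le> \<bar>c - real m\<bar> / real m"
    by (rule Eexp_close[OF mp cpos bnd_gp])
  moreover have "\<bar>c - real m\<bar> / real m \<le> real K / real n"
  proof -
    have "\<bar>c - real m\<bar> = real m - c" using c2 by simp
    also have "\<dots> \<le> real m - (real n - real K) * p" using c1 by simp
    also have "\<dots> = real m * real K / real n" unfolding p_def using n by (simp add: field_simps)
    finally show ?thesis using mp by (simp add: divide_le_eq field_simps)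
  qed
  moreover have "(1 - p) * pD n m \<le> Eexp c (gp m K)"
    using pD_upper[OF m K] unfolding c_def p_def .
  moreover have "p * pD n m \<le> p" using pD_le1[of n m] p by (simp add: mult_le_cancel_left1)
  moreover have "pD n m = (1 - p) * pD n m + p * pD n m" by (simp add: algebra_simps)
  moreover have "p = real m / real n" by (simp add: p_def)
  moreover have "(real K + real m) / real n = real K / real n + real m / real n" by (simp add: add_divide_distrib)
  ultimately show ?thesis unfolding Ip_def by linarith
qed

lemma partB:
  assumes m: "1 \<le> m"
  shows "(\<lambda>n. pD n m) \<longlonglongrightarrow> pX m"
proof (rule LIMSEQ_I)
  fix r :: real assume r: "0 < r"
  obtain N1 where N1: "\<And>N. N \<ge> N1 \<Longrightarrow> norm (Ip m N - pX m) < r / 2"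
    using LIMSEQ_D[OF Ip_tendsto_pX[OF m], of "r / 2"] r by auto
  define K where "K = max N1 m"
  have "norm (Ip m K - pX m) < r / 2" using N1[of K] by (simp add: K_def)
  then have IK: "Ip m K < pX m + r / 2" by (simp only: real_norm_def)
  have mK: "m \<le> K" by (simp add: K_def)
  obtain N0 :: nat where N0: "(2 * (real K + real m) + 2 * real m) / r < real N0"
    using reals_Archimedean2 by blast
  show "\<exists>no. \<forall>n\<ge>no. norm (pD n m - pX m) < r"
  proof (intro exI allI impI)
    fix n assume n: "max (max (K + 1) (2 * m)) N0 \<le> n"
    then have nK: "K < n" and n2m: "2 * m \<le> n" and nN0: "N0 \<le> n" by auto
    have np: "0 < real n" using nK by simp
    have "(2 * (real K + real m) + 2 * real m) < real N0 * r"
      using N0 r by (simp only: pos_divide_less_eq)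
    also have "real N0 * r \<le> real n * r" using nN0 r by (intro mult_right_mono) auto
    finally have "(2 * (real K + real m) + 2 * real m) < r * real n" by (simp add: mult.commute)
    then have A: "2 * (real K + real m) < r * real n" and B: "2 * real m < r * real n" by auto
    have up: "pD n m \<le> Ip m K + (real K + real m) / real n"
      by (rule pD_upper2[OF m mK nK])
    have "(real K + real m) / real n < r / 2" using A np by (simp add: divide_less_eq field_simps)
    then have U: "pD n m < pX m + r" using up IK by linarith
    have mn: "m < n" using nK mK by simp
    have lo: "pX m - real m / (real n - real m) \<le> pD n m" by (rule pD_lower2[OF m mn])
    have "real m / (real n - real m) \<le> 2 * real m / real n"
    proof -
      have h: "real m * (real m * 2) \<le> real m * real n" using n2m by (intro mult_left_mono) auto
      show ?thesis using h n2m np mn by (simp add: divide_le_eq field_simps)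
    qed
    also have "\<dots> < r" using B np by (simp add: divide_less_eq field_simps)
    finally have L: "pX m - r < pD n m" using lo by linarith
    show "norm (pD n m - pX m) < r" using U L by simp
  qed
qed

theorem proposition7:
  fixes m :: nat
  assumes "m \<ge> 1"
  shows "(\<lambda>n. pW n m - pX m) \<in> O(\<lambda>n. 1 / real n) \<and>
         (\<lambda>n. pD n m) \<longlonglongrightarrow> pX m"
  using partA[OF assms] partB[OF assms] by simp


end
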